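(* Let $n\ge 3$ and let $C_n$ be the cycle with vertices $v_1,\dots,v_n$ and edges $v_1v_2,v_2v_3,\dots,v_{n-1}v_n,v_nv_1$. Then $P_{\{v_1\}}(C_n)=\tfrac34$.
   Context: Classical zero forcing: given a set of black vertices (the rest white), the color change rule turns a white vertex $v$ black if $v$ is the only white neighbor of some black vertex $u$. A set $S$ is a zero forcing set if starting with $S$ black, finitely many applications of this rule make all of $V(G)$ black. Probabilistic process: for a vertex $u$, $N(u)$ is its open neighborhood, $N[u]=N(u)\cup\{u\}$, $\deg(u)=|N(u)|$. Given a current black set $Z$, $F(u\to v)=0$ if $u\notin Z$, or $v\notin N(u)$, or $N[u]\subseteq Z$; otherwise $F(u\to v)=|N[u]\cap Z|/\deg(u)$. One global application of the probabilistic color change rule: black vertices stay black; independently for every pair $(u,v)$ with $u$ black and $v\in N(u)$ white, $u$ forces $v$ with probability $F(u\to v)$; a white vertex becomes black iff some black neighbor forces it. Starting with black set $A$ at step $0$ and applying this rule repeatedly, let $S^k$ be the set of colorings reachable with positive probability after exactly $k$ steps and $P^{(k)}$ the probability distribution on them. Let $T^k\subseteq S^k$ be the colorings whose black set contains a classical zero forcing set of $G$. Define $P_A(G)=P^{(k_0)}(T^{k_0})$ where $k_0$ is the least $k\ge 0$ with $T^k\neq\emptyset$. *)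

theory Defs
  imports "HOL-Probability.Probability"
begin

text \<open>A finite simple graph is given by a vertex set V and a symmetric irreflexive
adjacency relation E (only its restriction to V matters).\<close>

definition nbhd :: "'a set \<Rightarrow> ('a \<Rightarrow> 'a \<Rightarrow> bool) \<Rightarrow> 'a \<Rightarrow> 'a set" where
  "nbhd V E u = {w \<in> V. E u w}"

definition cnbhd :: "'a set \<Rightarrow> ('a \<Rightarrow> 'a \<Rightarrow> bool) \<Rightarrow> 'a \<Rightarrow> 'a set" where
  "cnbhd V E u = insert u (nbhd V E u)"

definition deg :: "'a set \<Rightarrow> ('a \<Rightarrow> 'a \<Rightarrow> bool) \<Rightarrow> 'a \<Rightarrow> nat" where
  "deg V E u = card (nbhd V E u)"

inductive zf_derivable :: "'a set \<Rightarrow> ('a \<Rightarrow> 'a \<Rightarrow> bool) \<Rightarrow> 'a set \<Rightarrow> 'a set \<Rightarrow> bool"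
  for V E S where
  zf_base: "zf_derivable V E S S"
| zf_step: "\<lbrakk> zf_derivable V E S Z; u \<in> Z; v \<in> nbhd V E u; v \<notin> Z;
             \<forall>w \<in> nbhd V E u. w \<noteq> v \<longrightarrow> w \<in> Z \<rbrakk>
            \<Longrightarrow> zf_derivable V E S (insert v Z)"

definition zero_forcing_set :: "'a set \<Rightarrow> ('a \<Rightarrow> 'a \<Rightarrow> bool) \<Rightarrow> 'a set \<Rightarrow> bool" where
  "zero_forcing_set V E S \<longleftrightarrow> S \<subseteq> V \<and> zf_derivable V E S V"

definition force_prob :: "'a set \<Rightarrow> ('a \<Rightarrow> 'a \<Rightarrow> bool) \<Rightarrow> 'a set \<Rightarrow> 'a \<Rightarrow> 'a \<Rightarrow> real" where
  "force_prob V E Z u v =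
     (if u \<notin> Z \<or> v \<notin> nbhd V E u \<or> cnbhd V E u \<subseteq> Z then 0
      else real (card (cnbhd V E u \<inter> Z)) / real (deg V E u))"

definition force_pairs :: "'a set \<Rightarrow> ('a \<Rightarrow> 'a \<Rightarrow> bool) \<Rightarrow> 'a set \<Rightarrow> ('a \<times> 'a) set" where
  "force_pairs V E Z = {(u, v). u \<in> Z \<and> v \<in> nbhd V E u \<and> v \<notin> Z}"

text \<open>One global application of the probabilistic color change rule: independent
Bernoulli trials for every pair; a white vertex becomes black iff some pair forcing it succeeds.\<close>
definition prob_step :: "'a set \<Rightarrow> ('a \<Rightarrow> 'a \<Rightarrow> bool) \<Rightarrow> 'a set \<Rightarrow> 'a set pmf" where
  "prob_step V E Z =
     map_pmf (\<lambda>f. Z \<union> {v. \<exists>u. (u, v) \<in> force_pairs V E Z \<and> f (u, v)})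
       (Pi_pmf (force_pairs V E Z) False
          (\<lambda>(u, v). bernoulli_pmf (force_prob V E Z u v)))"

fun prob_dist :: "'a set \<Rightarrow> ('a \<Rightarrow> 'a \<Rightarrow> bool) \<Rightarrow> 'a set \<Rightarrow> nat \<Rightarrow> 'a set pmf" where
  "prob_dist V E A 0 = return_pmf A"
| "prob_dist V E A (Suc k) = bind_pmf (prob_dist V E A k) (prob_step V E)"

text \<open>S^k: colorings reachable with positive probability; T^k: those containing a ZF set.\<close>
definition reach_set :: "'a set \<Rightarrow> ('a \<Rightarrow> 'a \<Rightarrow> bool) \<Rightarrow> 'a set \<Rightarrow> nat \<Rightarrow> 'a set set" where
  "reach_set V E A k = set_pmf (prob_dist V E A k)"

definition zf_reach_set :: "'a set \<Rightarrow> ('a \<Rightarrow> 'a \<Rightarrow> bool) \<Rightarrow> 'a set \<Rightarrow> nat \<Rightarrow> 'a set set" where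
  "zf_reach_set V E A k = {Z \<in> reach_set V E A k. \<exists>S \<subseteq> Z. zero_forcing_set V E S}"

definition P_zf :: "'a set \<Rightarrow> ('a \<Rightarrow> 'a \<Rightarrow> bool) \<Rightarrow> 'a set \<Rightarrow> real" where
  "P_zf V E A =
     (let k0 = (LEAST k. zf_reach_set V E A k \<noteq> {})
      in measure_pmf.prob (prob_dist V E A k0) (zf_reach_set V E A k0))"

text \<open>Cycle C_n on vertices 0..n-1 (vertex i stands for v_(i+1)); edges i ~ i+1 mod n.\<close>
definition cycle_V :: "nat \<Rightarrow> nat set" where
  "cycle_V n = {0..<n}"

definition cycle_E :: "nat \<Rightarrow> nat \<Rightarrow> nat \<Rightarrow> bool" where
  "cycle_E n i j \<longleftrightarrow> i < n \<and> j < n \<and> (j = (i + 1) mod n \<or> i = (j + 1) mod n)"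

end

theory Submission imports Defs begin
lemma succ_mod: fixes w n :: nat assumes "w < n" shows "(w+1) mod n = (if w + 1 < n then w + 1 else 0)"
proof (cases "w + 1 < n")
  case True then show ?thesis by (simp only: mod_less if_True)
next
  case False then have "w + 1 = n" using assms by linarith
  then show ?thesis using False by simp
qed
lemma nb: assumes "n \<ge> 3" "u < n"
  shows "nbhd (cycle_V n) (cycle_E n) u = {(u+1) mod n, (u+n-1) mod n}"
proof -
  have p: "(u+n-1) mod n = (if u = 0 then n - 1 else u - 1)"
  proof (cases "u = 0")
    case True then show ?thesis using assms by simp
  next
    case False
    have "u + n - 1 = (u - 1) + n" using False by simp
    then have "(u+n-1) mod n = (u - 1) mod n" by simp
    also have "\<dots> = u - 1" using assms by (intro mod_less) linarith
    finally show ?thesis using False by simp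
  qed
  have dv: "\<And>w. w < n \<Longrightarrow> n dvd w + 1 \<Longrightarrow> w = n - 1"
    by (metis add_diff_cancel_right' dvd_imp_le le_antisym less_eq_Suc_le Suc_eq_plus1 zero_less_Suc)
  have "w \<in> nbhd (cycle_V n) (cycle_E n) u \<longleftrightarrow> w = (u+1) mod n \<or> w = (u+n-1) mod n" for w
    unfolding nbhd_def cycle_V_def cycle_E_def p
    using assms dv by (auto simp del: One_nat_def simp add: succ_mod split: if_splits)
  then show ?thesis by auto
qed

lemma nb0: assumes "n \<ge> 3" shows "nbhd (cycle_V n) (cycle_E n) 0 = {1, n - 1}"
  using nb[OF assms, of 0] assms by simp

lemma nbm: assumes "n \<ge> 3" "0 < u" "u + 1 < n"
  shows "nbhd (cycle_V n) (cycle_E n) u = {u + 1, u - 1}"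
proof -
  have "u + n - 1 = (u - 1) + n" using assms by simp
  then have "(u+n-1) mod n = (u - 1) mod n" by simp
  also have "\<dots> = u - 1" using assms by (intro mod_less) linarith
  finally show ?thesis using nb[OF assms(1), of u] assms by simp
qed

lemma single_stuck:
  assumes n: "n \<ge> 3"
  shows "zf_derivable (cycle_V n) (cycle_E n) S Z \<Longrightarrow> S \<subseteq> {0} \<Longrightarrow> Z \<subseteq> {0}"
proof (induction rule: zf_derivable.induct)
  case zf_base
  then show ?case by simp
next
  case (zf_step Z u v)
  then have u0: "u = 0" by auto
  have N: "nbhd (cycle_V n) (cycle_E n) u = {1, n - 1}" using nb0[OF n] u0 by simp
  have "1 \<noteq> n - 1" "n - 1 \<noteq> 0" using n by auto
  then show ?case using zf_step N by auto
qed

lemma not_zfs_single: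
  assumes n: "n \<ge> 3" and S: "S \<subseteq> {0}"
  shows "\<not> zero_forcing_set (cycle_V n) (cycle_E n) S"
proof
  assume "zero_forcing_set (cycle_V n) (cycle_E n) S"
  then have "cycle_V n \<subseteq> {0}" using single_stuck[OF n _ S] unfolding zero_forcing_set_def by blast
  moreover have "1 \<in> cycle_V n" using n by (simp add: cycle_V_def)
  ultimately show False by auto
qed

lemma zfs01:
  assumes n: "n \<ge> 3"
  shows "zero_forcing_set (cycle_V n) (cycle_E n) {0, 1}"
proof -
  have "zf_derivable (cycle_V n) (cycle_E n) {0,1} {0..<k}" if "2 \<le> k" "k \<le> n" for k
    using that
  proof (induction k rule: dec_induct)
    case base
    have "{0..<2::nat} = {0,1}" by auto
    then show ?case by (simp add: zf_base)
  next
    case (step k)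
    have N: "nbhd (cycle_V n) (cycle_E n) (k - 1) = {k, k - 2}"
      using nbm[OF n, of "k - 1"] step by (simp add: numeral_2_eq_2)
    have "zf_derivable (cycle_V n) (cycle_E n) {0,1} (insert k {0..<k})"
      apply (rule zf_step[where u = "k - 1"])
      using step N by auto
    moreover have "insert k {0..<k} = {0..<Suc k}" by auto
    ultimately show ?case by simp
  qed
  from this[of n] n show ?thesis unfolding zero_forcing_set_def cycle_V_def by auto
qed

lemma zfs0m:
  assumes n: "n \<ge> 3"
  shows "zero_forcing_set (cycle_V n) (cycle_E n) {0, n - 1}"
proof -
  have "zf_derivable (cycle_V n) (cycle_E n) {0,n - 1} (insert (n - 1) {0..<k})"
    if "1 \<le> k" "k \<le> n - 1" for k
    using that
  proof (induction k rule: dec_induct)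
    case base
    have "insert (n - 1) {0..<1::nat} = {0,n - 1}" by auto
    then show ?case by (simp add: zf_base)
  next
    case (step k)
    have N: "nbhd (cycle_V n) (cycle_E n) (k - 1) \<subseteq> {k, k - 2, n - 1}"
    proof (cases "k = 1")
      case True then show ?thesis using nb0[OF n] by auto
    next
      case False then show ?thesis using nbm[OF n, of "k - 1"] step by auto
    qed
    have kin: "k \<in> nbhd (cycle_V n) (cycle_E n) (k - 1)"
    proof (cases "k = 1")
      case True then show ?thesis using nb0[OF n] by auto
    next
      case False then show ?thesis using nbm[OF n, of "k - 1"] step by auto
    qed
    have "zf_derivable (cycle_V n) (cycle_E n) {0,n - 1} (insert k (insert (n - 1) {0..<k}))"
      apply (rule zf_step[where u = "k - 1"])
      using step N kin by auto
    moreover have "insert k (insert (n - 1) {0..<k}) = insert (n - 1) {0..<Suc k}" by auto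
    ultimately show ?case by simp
  qed
  from this[of "n - 1"] n have "zf_derivable (cycle_V n) (cycle_E n) {0,n - 1} (insert (n - 1) {0..<n - 1})"
    by auto
  moreover have "insert (n - 1) {0..<n - 1} = cycle_V n" using n unfolding cycle_V_def by auto
  ultimately show ?thesis using n unfolding zero_forcing_set_def cycle_V_def by auto
qed


lemma fp0: assumes n: "n \<ge> 3"
  shows "force_pairs (cycle_V n) (cycle_E n) {0} = {(0,1), (0, n - 1)}"
  using nb0[OF n] n unfolding force_pairs_def by auto

lemma fprob0: assumes n: "n \<ge> 3" and v: "v \<in> {1, n - 1}"
  shows "force_prob (cycle_V n) (cycle_E n) {0} 0 v = 1/2"
proof -
  have N: "nbhd (cycle_V n) (cycle_E n) 0 = {1, n - 1}" by (rule nb0[OF n])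
  have ne: "1 \<noteq> n - 1" using n by auto
  have c: "cnbhd (cycle_V n) (cycle_E n) 0 = {0, 1, n - 1}" using N by (simp add: cnbhd_def)
  have "cnbhd (cycle_V n) (cycle_E n) 0 \<inter> {0} = {0}" using c by auto
  moreover have "deg (cycle_V n) (cycle_E n) 0 = 2" using N ne by (simp add: deg_def)
  moreover have "\<not> cnbhd (cycle_V n) (cycle_E n) 0 \<subseteq> {0}" using c by auto
  ultimately show ?thesis using v N unfolding force_prob_def by auto
qed

theorem mainTheorem3:
  fixes n :: nat
  assumes "n \<ge> 3"
  shows "P_zf (cycle_V n) (cycle_E n) {0} = 3 / 4"
proof -
  note n = assms
  define V where "V = cycle_V n"
  define E where "E = cycle_E n"
  define FP where "FP = force_pairs V E {0}"
  have FP: "FP = {(0,1), (0, n - 1)}" unfolding FP_def V_def E_def by (rule fp0[OF n])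
  have ne: "1 \<noteq> n - 1" "n - 1 \<noteq> 0" using n by auto
  define g where "g = (\<lambda>f. {0::nat} \<union> {v. \<exists>u. (u, v) \<in> FP \<and> f (u, v)})"
  define Q where "Q = Pi_pmf FP False (\<lambda>(u, v). bernoulli_pmf (force_prob V E {0} u v))"
  define Zs where "Zs = {Z. \<exists>S \<subseteq> Z. zero_forcing_set V E S}"
  have p1: "prob_dist V E {0} 1 = map_pmf g Q"
    by (simp add: prob_step_def g_def Q_def FP_def bind_return_pmf)
  have gZ: "g f \<in> Zs \<longleftrightarrow> f (0,1) \<or> f (0, n - 1)" for f
  proof
    assume "g f \<in> Zs"
    then obtain S where S: "S \<subseteq> g f" "zero_forcing_set V E S" unfolding Zs_def by auto
    show "f (0,1) \<or> f (0, n - 1)"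
    proof (rule ccontr)
      assume "\<not> (f (0,1) \<or> f (0, n - 1))"
      then have "g f = {0}" unfolding g_def FP by auto
      then show False using S not_zfs_single[OF n] unfolding V_def E_def by auto
    qed
  next
    assume "f (0,1) \<or> f (0, n - 1)"
    then show "g f \<in> Zs"
    proof
      assume "f (0,1)"
      then have "{0,1} \<subseteq> g f" unfolding g_def FP by auto
      then show ?thesis using zfs01[OF n] unfolding Zs_def V_def E_def by blast
    next
      assume "f (0,n - 1)"
      then have "{0,n - 1} \<subseteq> g f" unfolding g_def FP by auto
      then show ?thesis using zfs0m[OF n] unfolding Zs_def V_def E_def by blast
    qed
  qed
  have pre: "g -` Zs = UNIV - Pi FP (\<lambda>_. {False})"
    using gZ unfolding FP by auto
  have fin: "finite FP" unfolding FP by simp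
  have "measure_pmf.prob Q (Pi FP (\<lambda>_. {False})) =
        (\<Prod>x\<in>FP. measure_pmf.prob ((\<lambda>(u, v). bernoulli_pmf (force_prob V E {0} u v)) x) {False})"
    unfolding Q_def by (rule measure_Pi_pmf_Pi[OF fin])
  also have "\<dots> = (\<Prod>x\<in>FP. 1/2)"
  proof (rule prod.cong[OF refl])
    fix x assume "x \<in> FP"
    then obtain v where x: "x = (0, v)" "v \<in> {1, n - 1}" unfolding FP by auto
    have "force_prob V E {0} 0 v = 1/2" unfolding V_def E_def by (rule fprob0[OF n x(2)])
    then show "measure_pmf.prob ((\<lambda>(u, v). bernoulli_pmf (force_prob V E {0} u v)) x) {False} = 1/2"
      using x by (simp add: measure_pmf_single)
  qed
  also have "\<dots> = 1/4" using ne unfolding FP by simp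
  finally have pF: "measure_pmf.prob Q (Pi FP (\<lambda>_. {False})) = 1/4" .
  have pZ: "measure_pmf.prob (prob_dist V E {0} 1) Zs = 3/4"
    unfolding p1 measure_map_pmf pre
    using measure_pmf.prob_compl[of "Pi FP (\<lambda>_. {False})" Q] pF by simp
  have zr: "zf_reach_set V E {0} k = set_pmf (prob_dist V E {0} k) \<inter> Zs" for k
    unfolding zf_reach_set_def reach_set_def Zs_def by auto
  have m1: "measure_pmf.prob (prob_dist V E {0} 1) (zf_reach_set V E {0} 1) = 3/4"
    using measure_Int_set_pmf[of "prob_dist V E {0} 1" Zs] pZ unfolding zr by (simp only: Int_commute)
  have r1: "zf_reach_set V E {0} 1 \<noteq> {}"
  proof
    assume "zf_reach_set V E {0} 1 = {}"
    then show False using m1 by simp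
  qed
  have r0: "zf_reach_set V E {0} 0 = {}"
    unfolding zf_reach_set_def reach_set_def using not_zfs_single[OF n] unfolding V_def E_def by auto
  have L: "(LEAST k. zf_reach_set V E {0} k \<noteq> {}) = 1"
  proof (rule Least_equality)
    show "zf_reach_set V E {0} 1 \<noteq> {}" by (rule r1)
  next
    fix y assume "zf_reach_set V E {0} y \<noteq> {}"
    then show "1 \<le> y" using r0 by (cases y) auto
  qed
  show ?thesis
    using m1 L unfolding P_zf_def V_def E_def by simp
qed

end
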